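(* Let $\mathcal X\subseteq[0,1]$ be a Borel set with $0\in\mathcal X$ and $1\in\mathcal X$, and fix $\mu\in(0,1)$. Let $\mathcal H_\mu=\{P\in\mathcal P_{\mathcal X}:\mathbb E_P[X]=\mu\}$, let $I_\mu=[(\mu-1)^{-1},\mu^{-1}]$, and let $$\mathcal E^{\mathrm{cb}}_\mu=\big\{E_\beta:x\mapsto 1+\beta(x-\mu)\,,\ \beta\in I_\mu\big\}.$$ Then $\mathcal E^{\mathrm{cb}}_\mu$ is the optimal e-class for $\mathcal H_\mu$.
   Context: $\mathcal P_{\mathcal Z}$ denotes the set of Borel probability measures on a Borel set $\mathcal Z\subseteq\mathbb R^d$. A hypothesis is a non-empty $\mathcal H\subseteq\mathcal P_{\mathcal Z}$. An e-variable for $\mathcal H$ is a Borel measurable $E:\mathcal Z\to[0,+\infty)$ with $\mathbb E_P[E]\le 1$ for all $P\in\mathcal H$; $\mathcal E_{\mathcal H}$ is the set of all e-variables for $\mathcal H$, and an e-class is any subset of $\mathcal E_{\mathcal H}$. For functions $f,f'$ on $\mathcal Z$, $f\succeq f'$ means $f(z)\ge f'(z)$ for all $z\in\mathcal Z$. An e-class $\mathcal E$ majorises an e-class $\mathcal E'$ if for every $E'\in\mathcal E'$ there is $E\in\mathcal E$ with $E\succeq E'$; $\mathcal E$ is a majorising e-class if it majorises $\mathcal E_{\mathcal H}$. A majorising e-class is called optimal if it is contained in every other majorising e-class. *)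

theory Defs
  imports "HOL-Probability.Probability"
begin

definition prob_measures_on :: "'a::topological_space set \<Rightarrow> 'a measure set" where
  "prob_measures_on Z = {P. prob_space P \<and> sets P = sets (restrict_space borel Z)}"

text \<open>Functions on Z are represented as total functions that vanish outside Z.\<close>
definition e_variables :: "'a::topological_space set \<Rightarrow> 'a measure set \<Rightarrow> ('a \<Rightarrow> real) set" where
  "e_variables Z H = {E. E \<in> borel_measurable (restrict_space borel Z)
      \<and> (\<forall>z\<in>Z. 0 \<le> E z) \<and> (\<forall>x. x \<notin> Z \<longrightarrow> E x = 0)
      \<and> (\<forall>P\<in>H. (\<integral>\<^sup>+ z. ennreal (E z) \<partial>P) \<le> 1)}"

definition majorises :: "'a set \<Rightarrow> ('a \<Rightarrow> real) set \<Rightarrow> ('a \<Rightarrow> real) set \<Rightarrow> bool" where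
  "majorises Z \<E> \<E>' \<longleftrightarrow> (\<forall>E'\<in>\<E>'. \<exists>E\<in>\<E>. \<forall>z\<in>Z. E' z \<le> E z)"

definition majorising_eclass :: "'a::topological_space set \<Rightarrow> 'a measure set \<Rightarrow> ('a \<Rightarrow> real) set \<Rightarrow> bool" where
  "majorising_eclass Z H \<E> \<longleftrightarrow> \<E> \<subseteq> e_variables Z H \<and> majorises Z \<E> (e_variables Z H)"

definition optimal_eclass :: "'a::topological_space set \<Rightarrow> 'a measure set \<Rightarrow> ('a \<Rightarrow> real) set \<Rightarrow> bool" where
  "optimal_eclass Z H \<E> \<longleftrightarrow> majorising_eclass Z H \<E>
     \<and> (\<forall>\<E>'. majorising_eclass Z H \<E>' \<longrightarrow> \<E> \<subseteq> \<E>')"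

end

theory Submission
  imports Defs
begin

lemma two_point:
  fixes X :: "real set"
  assumes x: "x \<in> X" and y: "y \<in> X" and p: "0 \<le> p" "p \<le> 1"
  defines "P \<equiv> distr (measure_pmf (bernoulli_pmf p)) (restrict_space borel X) (\<lambda>b. if b then x else y)"
  shows "P \<in> prob_measures_on X"
    and "(\<integral>z. z \<partial>P) = p * x + (1 - p) * y"
    and "\<And>E. E \<in> borel_measurable (restrict_space borel X) \<Longrightarrow> (\<forall>z\<in>X. 0 \<le> E z) \<Longrightarrow>
          (\<integral>\<^sup>+ z. ennreal (E z) \<partial>P) = ennreal (p * E x + (1 - p) * E y)"
proof -
  have m: "(\<lambda>b. if b then x else y) \<in> measurable (measure_pmf (bernoulli_pmf p)) (restrict_space borel X)"
    using x y by (auto simp: space_restrict_space)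
  show "P \<in> prob_measures_on X"
    unfolding prob_measures_on_def P_def
    using m by (auto intro!: measure_pmf.prob_space_distr)
  have "(\<integral>z. z \<partial>P) = (\<integral>b. (if b then x else y) \<partial>measure_pmf (bernoulli_pmf p))"
    unfolding P_def
    by (rule integral_distr[OF m]) (auto simp: measurable_restrict_space1)
  also have "\<dots> = p * x + (1 - p) * y" using p by simp
  finally show "(\<integral>z. z \<partial>P) = p * x + (1 - p) * y" .
  fix E :: "real \<Rightarrow> real"
  assume E: "E \<in> borel_measurable (restrict_space borel X)" and nn: "\<forall>z\<in>X. 0 \<le> E z"
  have "(\<integral>\<^sup>+ z. ennreal (E z) \<partial>P) = (\<integral>\<^sup>+ b. ennreal (E (if b then x else y)) \<partial>measure_pmf (bernoulli_pmf p))"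
    unfolding P_def by (rule nn_integral_distr[OF m]) (use E in auto)
  also have "\<dots> = ennreal (E x) * p + ennreal (E y) * (1 - p)" using p by simp
  also have "\<dots> = ennreal (p * E x + (1 - p) * E y)"
  proof -
    have a: "0 \<le> E x" "0 \<le> E y" using nn x y by auto
    have "ennreal (p * E x + (1 - p) * E y) = ennreal (p * E x) + ennreal ((1 - p) * E y)"
      using a p by (intro ennreal_plus) auto
    also have "\<dots> = ennreal (E x) * p + ennreal (E y) * (1 - p)"
      using a p by (simp add: ennreal_mult mult.commute)
    finally show ?thesis by simp
  qed
  finally show "(\<integral>\<^sup>+ z. ennreal (E z) \<partial>P) = ennreal (p * E x + (1 - p) * E y)" .
qed


locale setting =
  fixes X :: "real set" and \<mu> :: real
  assumes X: "X \<in> sets borel" "X \<subseteq> {0..1}" "0 \<in> X" "1 \<in> X"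
    and mu: "0 < \<mu>" "\<mu> < 1"
begin

abbreviation "H \<equiv> {P \<in> prob_measures_on X. (\<integral>x. x \<partial>P) = \<mu>}"
definition "Eb \<beta> = (\<lambda>x. if x \<in> X then 1 + \<beta> * (x - \<mu>) else 0)"

lemma D:
  assumes E: "E \<in> e_variables X H" and x: "x \<in> X" and y: "y \<in> X" and p: "0 \<le> p" "p \<le> 1"
    and m: "p * x + (1 - p) * y = \<mu>"
  shows "p * E x + (1 - p) * E y \<le> 1"
proof -
  let ?P = "distr (measure_pmf (bernoulli_pmf p)) (restrict_space borel X) (\<lambda>b. if b then x else y)"
  have "?P \<in> H" using two_point(1,2)[OF x y p] m by simp
  then have "(\<integral>\<^sup>+ z. ennreal (E z) \<partial>?P) \<le> 1" using E unfolding e_variables_def by auto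
  moreover have "(\<integral>\<^sup>+ z. ennreal (E z) \<partial>?P) = ennreal (p * E x + (1 - p) * E y)"
    using E by (intro two_point(3)[OF x y p]) (auto simp: e_variables_def)
  ultimately show ?thesis by simp
qed

lemma A:
  assumes b: "\<beta> \<in> {1 / (\<mu> - 1) .. 1 / \<mu>}"
  shows "Eb \<beta> \<in> e_variables X H"
proof -
  have b1: "\<beta> * \<mu> \<le> 1" using b mu by (auto simp: le_divide_eq)
  have "\<beta> * (\<mu> - 1) \<le> 1" using b mu by (auto simp: divide_le_eq)
  then have b2: "-1 \<le> \<beta> * (1 - \<mu>)" by (simp add: algebra_simps)
  have nn: "0 \<le> 1 + \<beta> * (z - \<mu>)" if "z \<in> {0..1}" for z
  proof -
    have "1 + \<beta> * (z - \<mu>) = (1 - z) * (1 - \<beta> * \<mu>) + z * (1 + \<beta> * (1 - \<mu>))"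
      by (simp add: algebra_simps)
    also have "\<dots> \<ge> 0"
    proof -
      have "(1 - z) * (1 - \<beta> * \<mu>) \<ge> 0" using that b1 by (intro mult_nonneg_nonneg) auto
      moreover have "z * (1 + \<beta> * (1 - \<mu>)) \<ge> 0" using that b2 by (intro mult_nonneg_nonneg) auto
      ultimately show ?thesis by linarith
    qed
    finally show ?thesis .
  qed
  have meas: "Eb \<beta> \<in> borel_measurable (restrict_space borel X)"
    unfolding Eb_def using X(1)
    by (intro measurable_restrict_space1) (auto intro!: borel_measurable_if)
  have "(\<integral>\<^sup>+ z. ennreal (Eb \<beta> z) \<partial>P) \<le> 1" if P: "P \<in> H" for P
  proof -
    have ps: "prob_space P" and sP: "sets P = sets (restrict_space borel X)"
      using P by (auto simp: prob_measures_on_def)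
    interpret prob_space P by (fact ps)
    have spP: "space P = X" using sets_eq_imp_space_eq[OF sP] by (simp add: space_restrict_space)
    have mP: "Eb \<beta> \<in> borel_measurable P" using meas by (simp add: measurable_cong_sets[OF sP refl])
    have idm: "(\<lambda>z. z) \<in> borel_measurable P"
      by (simp add: measurable_cong_sets[OF sP refl] measurable_restrict_space1)
    have intid: "integrable P (\<lambda>z. z)"
      by (rule integrable_const_bound[where B=1]) (use idm spP X(2) in \<open>auto intro!: AE_I2\<close>)
    have "integral\<^sup>L P (Eb \<beta>) = (\<integral>z. 1 + \<beta> * (z - \<mu>) \<partial>P)"
      by (rule Bochner_Integration.integral_cong) (auto simp: Eb_def spP)
    also have "\<dots> = 1 + \<beta> * ((\<integral>z. z \<partial>P) - \<mu>)"
      using intid prob_space by (simp add: algebra_simps)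
    also have "\<dots> = 1" using P by simp
    finally have i: "integral\<^sup>L P (Eb \<beta>) = 1" .
    have intE: "integrable P (Eb \<beta>)"
    proof (rule integrable_const_bound[where B="1 + \<bar>\<beta>\<bar>"])
      show "AE x in P. norm (Eb \<beta> x) \<le> 1 + \<bar>\<beta>\<bar>"
      proof (rule AE_I2)
        fix z assume "z \<in> space P"
        then have z: "z \<in> X" "0 \<le> z" "z \<le> 1" using spP X(2) by auto
        have "\<bar>\<beta> * (z - \<mu>)\<bar> \<le> \<bar>\<beta>\<bar> * 1"
          unfolding abs_mult using z mu by (intro mult_left_mono) auto
        then show "norm (Eb \<beta> z) \<le> 1 + \<bar>\<beta>\<bar>" using z by (auto simp: Eb_def)
      qed
    qed (fact mP)
    have "(\<integral>\<^sup>+ z. ennreal (Eb \<beta> z) \<partial>P) = ennreal (integral\<^sup>L P (Eb \<beta>))"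
      by (rule nn_integral_eq_integral[OF intE]) (use spP X(2) nn in \<open>auto simp: Eb_def intro!: AE_I2\<close>)
    then show ?thesis using i by simp
  qed
  then show ?thesis unfolding e_variables_def using meas nn X(2) by (auto simp: Eb_def)
qed


lemma cross:
  assumes E: "E \<in> e_variables X H" and x: "x \<in> X" "x < \<mu>" and y: "y \<in> X" "\<mu> < y"
  shows "(E y - 1) / (y - \<mu>) \<le> (1 - E x) / (\<mu> - x)"
proof -
  define p where "p = (y - \<mu>) / (y - x)"
  have yx: "y - x > 0" using x y by simp
  have p: "0 \<le> p" "p \<le> 1" using x y yx by (auto simp: p_def divide_le_eq)
  have "p * (y - x) = y - \<mu>" unfolding p_def using yx by simp
  then have m: "p * x + (1 - p) * y = \<mu>" by (simp add: algebra_simps)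
  have 1: "p * E x + (1 - p) * E y \<le> 1" by (rule D[OF E x(1) y(1) p m])
  have a1: "(y - x) * p = y - \<mu>" unfolding p_def using yx by simp
  have a2: "(y - x) * (1 - p) = \<mu> - x" using a1 by (simp add: algebra_simps)
  have "(y - x) * (p * E x + (1 - p) * E y) \<le> (y - x) * 1" using 1 yx by (intro mult_left_mono) auto
  moreover have "(y - x) * (p * E x + (1 - p) * E y) = ((y - x) * p) * E x + ((y - x) * (1 - p)) * E y"
    by (simp add: algebra_simps)
  ultimately have "(y - \<mu>) * E x + (\<mu> - x) * E y \<le> y - x" unfolding a1 a2 by simp
  then have "(E y - 1) * (\<mu> - x) \<le> (1 - E x) * (y - \<mu>)" by (simp add: algebra_simps)
  then show ?thesis using x y by (simp add: field_simps)
qed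

lemma B:
  assumes E: "E \<in> e_variables X H"
  shows "\<exists>\<beta>\<in>{1 / (\<mu> - 1) .. 1 / \<mu>}. \<forall>z\<in>X. E z \<le> Eb \<beta> z"
proof -
  define S where "S = {(1 - E x) / (\<mu> - x) | x. x \<in> X \<and> x < \<mu>}"
  define \<beta> where "\<beta> = Inf S"
  have Enn: "\<And>z. z \<in> X \<Longrightarrow> 0 \<le> E z" using E by (auto simp: e_variables_def)
  have S0: "(1 - E 0) / \<mu> \<in> S" unfolding S_def using X mu by force
  have low: "(E 1 - 1) / (1 - \<mu>) \<le> s" if "s \<in> S" for s
    using that cross[OF E _ _ X(4) mu(2)] unfolding S_def by auto
  have bdd: "bdd_below S" using low by (auto simp: bdd_below_def)
  have ne: "S \<noteq> {}" using S0 by auto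
  have b_up: "\<beta> \<le> (1 - E x) / (\<mu> - x)" if "x \<in> X" "x < \<mu>" for x
    unfolding \<beta>_def using that bdd by (intro cInf_lower) (auto simp: S_def)
  have b_low: "(E y - 1) / (y - \<mu>) \<le> \<beta>" if "y \<in> X" "\<mu> < y" for y
    unfolding \<beta>_def using ne
    by (rule cInf_greatest) (use that cross[OF E _ _ that] in \<open>auto simp: S_def\<close>)
  have "\<beta> \<le> (1 - E 0) / \<mu>" using b_up[OF X(3)] mu by simp
  also have "\<dots> \<le> 1 / \<mu>" using Enn[OF X(3)] mu by (simp add: divide_right_mono)
  finally have bu: "\<beta> \<le> 1 / \<mu>" .
  have "1 / (\<mu> - 1) = (0 - 1) / (1 - \<mu>)" using mu by (simp add: field_simps)
  also have "\<dots> \<le> (E 1 - 1) / (1 - \<mu>)" using Enn[OF X(4)] mu by (intro divide_right_mono) auto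
  also have "\<dots> \<le> \<beta>" using b_low[OF X(4) mu(2)] .
  finally have bl: "1 / (\<mu> - 1) \<le> \<beta>" .
  have "E z \<le> Eb \<beta> z" if z: "z \<in> X" for z
  proof (cases "z < \<mu>")
    case True
    then have "\<beta> \<le> (1 - E z) / (\<mu> - z)" using b_up z by auto
    then have "\<beta> * (\<mu> - z) \<le> 1 - E z" using True by (simp add: le_divide_eq)
    then show ?thesis using z by (simp add: Eb_def algebra_simps)
  next
    case False
    show ?thesis
    proof (cases "z = \<mu>")
      case True
      have "1 * E z + (1 - 1) * E z \<le> 1" by (rule D[OF E z z]) (use True in auto)
      then show ?thesis using z True by (simp add: Eb_def)
    next
      case F2: False
      with False have zm: "\<mu> < z" by simp
      have "(E z - 1) / (z - \<mu>) \<le> \<beta>" using b_low z zm by auto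
      then have "E z - 1 \<le> \<beta> * (z - \<mu>)" using zm by (simp add: divide_le_eq)
      then show ?thesis using z by (simp add: Eb_def algebra_simps)
    qed
  qed
  then show ?thesis using bu bl by (intro bexI[of _ \<beta>]) auto
qed

lemma C:
  assumes b: "\<beta> \<in> {1 / (\<mu> - 1) .. 1 / \<mu>}" and E: "E \<in> e_variables X H"
    and ge: "\<forall>z\<in>X. Eb \<beta> z \<le> E z"
  shows "E = Eb \<beta>"
proof
  fix z
  show "E z = Eb \<beta> z"
  proof (cases "z \<in> X")
    case False
    then show ?thesis using E by (auto simp: e_variables_def Eb_def)
  next
    case z: True
    have zr: "0 \<le> z" "z \<le> 1" using z X(2) by auto
    show ?thesis
    proof (rule ccontr)
      assume "E z \<noteq> Eb \<beta> z"
      with ge z have gt: "Eb \<beta> z < E z" by force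
      consider "z = \<mu>" | "z < \<mu>" | "\<mu> < z" by linarith
      then show False
      proof cases
        case 1
        have "1 * E z + (1 - 1) * E z \<le> 1" by (rule D[OF E z z]) (use 1 in auto)
        then show False using gt 1 z by (simp add: Eb_def)
      next
        case 2
        define p where "p = (1 - \<mu>) / (1 - z)"
        have z1: "1 - z > 0" using 2 mu by simp
        have p: "0 < p" "p \<le> 1" using 2 mu z1 by (auto simp: p_def divide_le_eq)
        have "p * (1 - z) = 1 - \<mu>" unfolding p_def using z1 by simp
        then have m: "p * z + (1 - p) * 1 = \<mu>" by (simp add: algebra_simps)
        have d: "p * E z + (1 - p) * E 1 \<le> 1" by (rule D[OF E z X(4)]) (use p m in auto)
        have e1: "Eb \<beta> 1 \<le> E 1" using ge X(4) by auto
        have "p * Eb \<beta> z + (1 - p) * Eb \<beta> 1 = 1 + \<beta> * (p * z + (1 - p) * 1 - \<mu>)"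
          using z X(4) by (simp add: Eb_def algebra_simps)
        also have "\<dots> = 1" using m by simp
        finally have eq: "p * Eb \<beta> z + (1 - p) * Eb \<beta> 1 = 1" .
        have "p * Eb \<beta> z < p * E z" using gt p by simp
        moreover have "(1 - p) * Eb \<beta> 1 \<le> (1 - p) * E 1" using e1 p by (intro mult_left_mono) auto
        ultimately show False using eq d by linarith
      next
        case 3
        define p where "p = \<mu> / z"
        have z0: "z > 0" using 3 mu by simp
        have p: "0 < p" "p \<le> 1" using 3 mu z0 by (auto simp: p_def divide_le_eq)
        have m: "p * z + (1 - p) * 0 = \<mu>" unfolding p_def using z0 by (simp add: field_simps)
        have d: "p * E z + (1 - p) * E 0 \<le> 1" by (rule D[OF E z X(3)]) (use p m in auto)
        have e1: "Eb \<beta> 0 \<le> E 0" using ge X(3) by auto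
        have "p * Eb \<beta> z + (1 - p) * Eb \<beta> 0 = 1 + \<beta> * (p * z + (1 - p) * 0 - \<mu>)"
          using z X(3) by (simp add: Eb_def algebra_simps)
        also have "\<dots> = 1" using m by simp
        finally have eq: "p * Eb \<beta> z + (1 - p) * Eb \<beta> 0 = 1" .
        have "p * Eb \<beta> z < p * E z" using gt p by simp
        moreover have "(1 - p) * Eb \<beta> 0 \<le> (1 - p) * E 0" using e1 p by (intro mult_left_mono) auto
        ultimately show False using eq d by linarith
      qed
    qed
  qed
qed

end

theorem theorem1:
  fixes X :: "real set" and \<mu> :: real
  assumes "X \<in> sets borel" and "X \<subseteq> {0..1}" and "0 \<in> X" and "1 \<in> X"
    and "0 < \<mu>" and "\<mu> < 1"
  shows "optimal_eclass X {P \<in> prob_measures_on X. (\<integral>x. x \<partial>P) = \<mu>}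
           {(\<lambda>x. if x \<in> X then 1 + \<beta> * (x - \<mu>) else 0) | \<beta>. \<beta> \<in> {1 / (\<mu> - 1) .. 1 / \<mu>}}"
proof -
  interpret setting X \<mu> using assms by unfold_locales
  have C_eq: "{(\<lambda>x. if x \<in> X then 1 + \<beta> * (x - \<mu>) else 0) | \<beta>. \<beta> \<in> {1 / (\<mu> - 1) .. 1 / \<mu>}}
     = {Eb \<beta> | \<beta>. \<beta> \<in> {1 / (\<mu> - 1) .. 1 / \<mu>}}" by (simp add: Eb_def)
  have maj: "majorising_eclass X H {Eb \<beta> | \<beta>. \<beta> \<in> {1 / (\<mu> - 1) .. 1 / \<mu>}}"
    unfolding majorising_eclass_def majorises_def using A B by blast
  have "{Eb \<beta> | \<beta>. \<beta> \<in> {1 / (\<mu> - 1) .. 1 / \<mu>}} \<subseteq> \<E>'" if M: "majorising_eclass X H \<E>'" for \<E>'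
  proof
    fix F assume "F \<in> {Eb \<beta> | \<beta>. \<beta> \<in> {1 / (\<mu> - 1) .. 1 / \<mu>}}"
    then obtain \<beta> where b: "\<beta> \<in> {1 / (\<mu> - 1) .. 1 / \<mu>}" and F: "F = Eb \<beta>" by auto
    from M A[OF b] obtain E where E: "E \<in> \<E>'" "\<forall>z\<in>X. Eb \<beta> z \<le> E z"
      unfolding majorising_eclass_def majorises_def by blast
    have "E \<in> e_variables X H" using M E(1) unfolding majorising_eclass_def by blast
    then have "E = Eb \<beta>" using C[OF b _ E(2)] by simp
    then show "F \<in> \<E>'" using E F by simp
  qed
  then show ?thesis unfolding C_eq optimal_eclass_def using maj by blast
qed

end
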